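(* Let $0\le\alpha<1$. The radius of starlikeness of order $\alpha$ of the class of analytic functions $f(z)=z+\sum_{n\ge2}a_nz^n$ on $\mathbb{D}$ with $|a_n|\le n$ for all $n\ge2$ is the real root in $(0,1)$ of the equation \[2(1-\alpha)(1-r)^3=1-\alpha+(1+\alpha)r.\] In particular, the radius of starlikeness of this class is \[r_0(0)=1+\frac{1}{6^{2/3}}\left((\sqrt{330}-18)^{1/3}-(\sqrt{330}+18)^{1/3}\right)\approx0.164878,\] and the radius of starlikeness of order $1/2$, which equals the radius of parabolic starlikeness of the class, is \[r_0(1/2)=1+\frac{1}{\sqrt2}\left((3-2\sqrt2)^{1/3}-(3+2\sqrt2)^{1/3}\right)\approx0.120385.\] These results are sharp.
   Context: $\mathbb{D}=\{z\in\mathbb{C}:|z|<1\}$. For a class $\mathcal{F}$ of analytic functions on $\mathbb{D}$ normalized by $f(0)=0$, $f'(0)=1$, and $0\le\alpha<1$, the radius of starlikeness of order $\alpha$ of $\mathcal{F}$ is the supremum of $r\in(0,1]$ such that every $f\in\mathcal{F}$ satisfies $f(z)\ne0$ for $0<|z|<r$ and $\operatorname{Re}\big(zf'(z)/f(z)\big)>\alpha$ for $|z|<r$ (the quotient being $1$ at $z=0$); the radius of starlikeness means the case $\alpha=0$. The radius of parabolic starlikeness of $\mathcal{F}$ is the supremum of $r\in(0,1]$ such that every $f\in\mathcal{F}$ satisfies $\operatorname{Re}\big(zf'(z)/f(z)\big)>\left|zf'(z)/f(z)-1\right|$ for $|z|<r$. *)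

theory Defs
  imports "HOL-Analysis.Analysis"
begin

definition coeff_class :: "(complex \<Rightarrow> complex) set" where
  "coeff_class = {f. f holomorphic_on ball 0 1 \<and> f 0 = 0 \<and> deriv f 0 = 1 \<and>
      (\<forall>n\<ge>2. cmod ((deriv ^^ n) f 0 / of_nat (fact n)) \<le> real n)}"

definition starq :: "(complex \<Rightarrow> complex) \<Rightarrow> complex \<Rightarrow> complex" where
  "starq f z = (if z = 0 then 1 else z * deriv f z / f z)"

definition radius_starlike_order :: "(complex \<Rightarrow> complex) set \<Rightarrow> real \<Rightarrow> real" where
  "radius_starlike_order F \<alpha> = Sup {r. 0 < r \<and> r \<le> 1 \<and> (\<forall>f\<in>F.
      (\<forall>z. 0 < cmod z \<and> cmod z < r \<longrightarrow> f z \<noteq> 0) \<and>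
      (\<forall>z. cmod z < r \<longrightarrow> Re (starq f z) > \<alpha>))}"

definition radius_parabolic :: "(complex \<Rightarrow> complex) set \<Rightarrow> real" where
  "radius_parabolic F = Sup {r. 0 < r \<and> r \<le> 1 \<and> (\<forall>f\<in>F.
      \<forall>z. cmod z < r \<longrightarrow> Re (starq f z) > cmod (starq f z - 1))}"

end

theory Submission
  imports Defs "HOL-Complex_Analysis.Complex_Analysis"
begin

lemma sums_S1:
  fixes z :: "'a::{real_normed_field,banach}" assumes "norm z < 1"
  shows "(\<lambda>n. of_nat (n+2) * z^(n+1)) sums (1/(1-z)^2 - 1)"
proof -
  have "(\<lambda>n. of_nat (Suc n) * z ^ n) sums (1 / (1 - z)^2)"
    by (rule geometric_deriv_sums[OF assms])
  then have "(\<lambda>n. of_nat (Suc (Suc n)) * z ^ (Suc n)) sums (1 / (1 - z)^2 - 1)"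
    by (subst sums_Suc_iff) simp
  then show ?thesis by (simp add: add.commute)
qed

lemma sums_second:
  fixes z :: "'a::{real_normed_field,banach}" assumes "norm z < 1"
  shows "(\<lambda>n. of_nat ((n+1)*(n+2)) * z^n) sums (2/(1-z)^3)"
proof -
  have "(\<lambda>n. diffs (\<lambda>n. of_nat (Suc n)) n * z^n) sums (2/(1-z)^3)"
  proof (rule termdiffs_sums_strong[where K=1])
    fix w :: 'a assume "norm w < 1"
    thus "(\<lambda>n. of_nat (Suc n) * w^n) sums (1 / (1 - w)^2)" by (rule geometric_deriv_sums)
  next
    have "z \<noteq> 1" using assms by auto
    then have nz: "1 - z \<noteq> 0" by auto
    have "((\<lambda>w. inverse ((1 - w)^2)) has_field_derivative - (inverse ((1-z)^2) * (of_nat 2 * (1-z)^1 * (0 - 1)) * inverse ((1-z)^2))) (at z)"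
      by (rule derivative_eq_intros refl | use nz in simp)+
    moreover have "- (inverse ((1-z)^2) * (of_nat 2 * (1-z)^1 * (0 - 1)) * inverse ((1-z)^2)) = 2/(1-z)^3"
    proof -
      have "\<And>u::'a. u \<noteq> 0 \<Longrightarrow> - (inverse (u^2) * (of_nat 2 * u^1 * (0 - 1)) * inverse (u^2)) = 2/u^3"
        by (simp add: field_simps power2_eq_square power3_eq_cube)
      from this[OF nz] show ?thesis .
    qed
    ultimately show "((\<lambda>w. 1 / (1 - w)^2) has_field_derivative 2/(1-z)^3) (at z)"
      by (simp add: divide_inverse)
  qed (use assms in auto)
  thus ?thesis unfolding diffs_def by (simp add: algebra_simps)
qed

lemma sums_S2:
  fixes z :: "'a::{real_normed_field,banach}" assumes "norm z < 1"
  shows "(\<lambda>n. of_nat ((n+1)*(n+2)) * z^(n+1)) sums (2*z/(1-z)^3)"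
  using sums_mult[OF sums_second[OF assms], of z] by (simp add: mult_ac)

lemma key:
  assumes f: "f \<in> coeff_class" and z: "norm z < 1" "z \<noteq> 0"
    and S1: "1/(1 - norm z)^2 - 1 < 1"
  shows "f z \<noteq> 0 \<and> cmod (starq f z - 1) \<le> (2 * norm z / (1 - norm z)^3) / (1 - (1/(1 - norm z)^2 - 1))"
proof -
  define r where "r = norm z"
  have r: "0 \<le> r" "r < 1" using z by (auto simp: r_def)
  define a where "a n = (deriv ^^ n) f 0 / fact n" for n
  have hol: "f holomorphic_on ball 0 1" and f0: "f 0 = 0" and d0: "deriv f 0 = 1"
    and bnd: "\<And>n. n \<ge> 2 \<Longrightarrow> cmod (a n) \<le> real n"
    using f by (auto simp: coeff_class_def a_def)
  have a0: "a 0 = 0" using f0 by (simp add: a_def)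
  have a1: "a (Suc 0) = 1" using d0 by (simp add: a_def)
  have zb: "z \<in> ball 0 1" using z by simp
  have sf: "(\<lambda>n. a n * z^n) sums f z"
    using holomorphic_power_series[OF hol zb] by (simp add: a_def)
  have hold: "deriv f holomorphic_on ball 0 1"
    by (rule holomorphic_deriv[OF hol open_ball])
  have sd0: "(\<lambda>n. (deriv ^^ n) (deriv f) 0 / fact n * z^n) sums deriv f z"
    using holomorphic_power_series[OF hold zb] by simp
  have coef: "(deriv ^^ n) (deriv f) 0 / fact n = of_nat (Suc n) * a (Suc n)" for n
  proof -
    have "(deriv ^^ n) (deriv f) = (deriv ^^ Suc n) f" by (simp only: funpow_Suc_right o_def)
    moreover have "(fact n :: complex) \<noteq> 0" "(1 + of_nat n :: complex) \<noteq> 0"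
      by simp (metis of_nat_Suc of_nat_eq_0_iff nat.distinct(1))
    ultimately show ?thesis
      by (simp add: a_def divide_simps del: funpow.simps)
  qed
  have sd: "(\<lambda>n. of_nat (Suc n) * a (Suc n) * z^n) sums deriv f z"
    using sd0 by (simp only: coef)
  define A where "A = (\<Sum>n. a (n+2) * z^(n+1))"
  define B where "B = (\<Sum>n. of_nat (n+1) * a (n+2) * z^(n+1))"
  have RS1: "(\<lambda>n. of_nat (n+2) * r^(n+1)) sums (1/(1-r)^2 - 1)"
    using sums_S1[of r] r by simp
  have RS2: "(\<lambda>n. of_nat ((n+1)*(n+2)) * r^(n+1)) sums (2*r/(1-r)^3)"
    using sums_S2[of r] r by simp
  have nA: "norm (a (n+2) * z^(n+1)) \<le> of_nat (n+2) * r^(n+1)" for n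
    using bnd[of "n+2"] by (simp add: norm_mult norm_power r_def mult_right_mono)
  have nB: "norm (of_nat (n+1) * a (n+2) * z^(n+1)) \<le> of_nat ((n+1)*(n+2)) * r^(n+1)" for n
  proof -
    have "norm (a (n+2)) * r^(n+1) \<le> real (n+2) * r^(n+1)"
      using bnd[of "n+2"] r by (intro mult_right_mono) auto
    then have le: "real (n+1) * (norm (a (n+2)) * r^(n+1)) \<le> real (n+1) * (real (n+2) * r^(n+1))"
      by (intro mult_left_mono) auto
    have "norm (of_nat (n+1) * a (n+2) * z^(n+1)) = real (n+1) * (norm (a (n+2)) * r^(n+1))"
      by (simp add: norm_mult norm_power r_def del: of_nat_Suc)
    also note le
    also have "real (n+1) * (real (n+2) * r^(n+1)) = real ((n+1)*(n+2)) * r^(n+1)"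
      by (simp only: of_nat_mult mult.assoc)
    finally show ?thesis .
  qed
  have sumA: "summable (\<lambda>n. a (n+2) * z^(n+1))"
    by (rule summable_norm_cancel, rule summable_comparison_test[OF _ sums_summable[OF RS1]]) (use nA in auto)
  have sumB: "summable (\<lambda>n. of_nat (n+1) * a (n+2) * z^(n+1))"
    by (rule summable_norm_cancel, rule summable_comparison_test[OF _ sums_summable[OF RS2]]) (use nB in auto)
  have normA: "norm A \<le> 1/(1-r)^2 - 1"
    unfolding A_def using norm_suminf_le[OF nA sums_summable[OF RS1]] sums_unique[OF RS1] by simp
  have normB: "norm B \<le> 2*r/(1-r)^3"
    unfolding B_def using norm_suminf_le[OF nB sums_summable[OF RS2]] sums_unique[OF RS2] by simp
  have s1: "(\<lambda>n. a (Suc n) * z^(Suc n)) sums (f z - a 0 * z^0)"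
    using sf by (subst sums_Suc_iff) simp
  have "(\<lambda>n. a (Suc (Suc n)) * z^(Suc (Suc n))) sums (f z - a 0 * z^0 - a (Suc 0) * z^(Suc 0))"
    using s1 by (subst sums_Suc_iff) simp
  then have "(\<lambda>n. z * (a (n+2) * z^(n+1))) sums (f z - z)"
    by (simp add: a0 a1 mult_ac)
  moreover have "(\<lambda>n. z * (a (n+2) * z^(n+1))) sums (z * A)"
    unfolding A_def by (rule sums_mult[OF summable_sums[OF sumA]])
  ultimately have fz: "f z = z * (1 + A)"
    using sums_unique2 by (fastforce simp: algebra_simps)
  have "(\<lambda>n. of_nat (Suc (Suc n)) * a (Suc (Suc n)) * z^(Suc n)) sums (deriv f z - of_nat (Suc 0) * a (Suc 0) * z^0)"
    using sd by (subst sums_Suc_iff) simp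
  then have "(\<lambda>n. a (n+2) * z^(n+1) + of_nat (n+1) * a (n+2) * z^(n+1)) sums (deriv f z - 1)"
    by (simp add: a1 algebra_simps)
  moreover have "(\<lambda>n. a (n+2) * z^(n+1) + of_nat (n+1) * a (n+2) * z^(n+1)) sums (A + B)"
    unfolding A_def B_def by (intro sums_add summable_sums sumA sumB)
  ultimately have dz: "deriv f z = 1 + A + B"
    using sums_unique2 by (fastforce simp: algebra_simps)
  have S1': "1/(1-r)^2 - 1 < 1" using S1 by (simp add: r_def)
  have "norm (1 + A) \<ge> 1 - norm A"
    using norm_triangle_ineq2[of 1 "-A"] by simp
  then have nz: "norm (1 + A) \<ge> 1 - (1/(1-r)^2 - 1)" using normA by linarith
  then have pos: "norm (1 + A) > 0" using S1' by linarith
  then have A1: "1 + A \<noteq> 0" by auto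
  have fnz: "f z \<noteq> 0" using fz A1 z by simp
  have "starq f z = (1 + A + B) / (1 + A)"
    using z A1 by (simp add: starq_def fz dz)
  moreover have "(1 + A + B) / (1 + A) - 1 = B / (1 + A)"
    using A1 by (simp add: diff_divide_distrib add_divide_distrib)
  ultimately have "starq f z - 1 = B / (1 + A)" by simp
  then have "cmod (starq f z - 1) = norm B / norm (1 + A)" by (simp add: norm_divide)
  also have "\<dots> \<le> (2*r/(1-r)^3) / (1 - (1/(1-r)^2 - 1))"
    by (rule frac_le) (use normB nz S1' r in auto)
  finally show ?thesis using fnz by (simp add: r_def)
qed

definition f0 :: "complex \<Rightarrow> complex" where "f0 z = 2*z - z/(1-z)^2"

definition c0 :: "nat \<Rightarrow> complex" where "c0 n = (if n = 1 then 1 else - of_nat n)"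

lemma f0_sums: assumes "norm z < 1" shows "(\<lambda>n. c0 n * z^n) sums f0 z"
proof -
  have "(\<lambda>n. z * (of_nat (Suc n) * z ^ n)) sums (z * (1 / (1 - z)^2))"
    by (rule sums_mult[OF geometric_deriv_sums[OF assms]])
  then have "(\<lambda>n. of_nat (Suc n) * z ^ (Suc n)) sums (z / (1 - z)^2)"
    by (simp add: mult_ac)
  then have g: "(\<lambda>n. of_nat n * z ^ n) sums (z / (1 - z)^2)"
    by (subst (asm) sums_Suc_iff) simp
  have h: "(\<lambda>n. if n = 1 then 2 * z ^ n else 0) sums (2 * z ^ 1)"
    by (rule sums_single)
  have "(\<lambda>n. (if n = 1 then 2 * z ^ n else 0) - of_nat n * z ^ n) sums (2 * z ^ 1 - z / (1 - z)^2)"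
    by (rule sums_diff[OF h g])
  moreover have "(\<lambda>n. (if n = 1 then 2 * z ^ n else 0) - of_nat n * z ^ n) = (\<lambda>n. c0 n * z^n)"
    by (auto simp: c0_def)
  ultimately show ?thesis by (simp add: f0_def)
qed

lemma f0_fps: "f0 has_fps_expansion Abs_fps c0"
  unfolding has_fps_expansion_def
proof
  have "summable (\<lambda>n. c0 n * (1/2) ^ n)" using f0_sums[of "1/2"] by (auto dest: sums_summable)
  then have "conv_radius c0 \<ge> norm (1/2 :: complex)" by (rule conv_radius_geI)
  then show "0 < fps_conv_radius (Abs_fps c0)"
    unfolding fps_conv_radius_def by (auto elim!: less_le_trans[rotated])
  have "eventually (\<lambda>z. z \<in> ball (0::complex) 1) (nhds 0)"
    by (rule eventually_nhds_in_open) auto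
  then show "eventually (\<lambda>z. eval_fps (Abs_fps c0) z = f0 z) (nhds 0)"
    by eventually_elim (use f0_sums in \<open>auto simp: eval_fps_def sums_iff\<close>)
qed

lemma f0_coeff: "(deriv ^^ n) f0 0 / fact n = c0 n"
  using fps_nth_fps_expansion[OF f0_fps, of n] by simp

lemma f0_class: "f0 \<in> coeff_class"
proof -
  have "f0 holomorphic_on ball 0 1"
    unfolding f0_def[abs_def] by (intro holomorphic_intros) (auto simp: dist_norm)
  moreover have "f0 0 = 0" by (simp add: f0_def)
  moreover have "deriv f0 0 = 1" using f0_coeff[of 1] by (simp add: c0_def)
  moreover have "\<forall>n\<ge>2. cmod ((deriv ^^ n) f0 0 / of_nat (fact n)) \<le> real n"
    using f0_coeff by (simp add: c0_def)
  ultimately show ?thesis by (simp add: coeff_class_def)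
qed

lemma f0_deriv: assumes "z \<noteq> 1" shows "deriv f0 z = 2 - (1+z)/(1-z)^3"
proof -
  have nz: "1 - z \<noteq> 0" using assms by auto
  have "(f0 has_field_derivative (2 * 1 - (1 * (1-z)^2 - z * (of_nat 2 * (1-z)^1 * (0 - 1))) / ((1-z)^2 * (1-z)^2))) (at z)"
    unfolding f0_def[abs_def] by (rule derivative_eq_intros refl | use nz in simp)+
  moreover have "(2 * 1 - (1 * (1-z)^2 - z * (of_nat 2 * (1-z)^1 * (0 - 1))) / ((1-z)^2 * (1-z)^2)) = 2 - (1+z)/(1-z)^3"
  proof -
    have "\<And>u::complex. u \<noteq> 0 \<Longrightarrow> (2 * 1 - (1 * u^2 - (1-u) * (of_nat 2 * u^1 * (0 - 1))) / (u^2 * u^2)) = 2 - (1+(1-u))/u^3"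
      by (simp add: field_simps power2_eq_square power3_eq_cube)
    from this[OF nz] show ?thesis by simp
  qed
  ultimately show ?thesis by (simp add: DERIV_imp_deriv)
qed

lemma sharp:
  fixes t \<alpha> :: real
  assumes t: "0 < t" "t < 1" and eq: "2*(1-\<alpha>)*(1-t)^3 = 1-\<alpha>+(1+\<alpha>)*t"
  shows "starq f0 (of_real t) = of_real \<alpha> \<or> starq f0 (of_real t) = 0"
proof -
  define D where "D = 2 - (1+t)/(1-t)^3"
  define F where "F = 2*t - t/(1-t)^2"
  have nz: "1 - t \<noteq> 0" using t by simp
  have "complex_of_real t \<noteq> 1" using t by (metis of_real_1 of_real_eq_iff less_irrefl)
  then have dd: "deriv f0 (of_real t) = of_real D"
    by (simp add: f0_deriv D_def)
  have ff: "f0 (of_real t) = of_real F" by (simp add: f0_def F_def)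
  have key: "t * D = \<alpha> * F"
  proof -
    have "\<And>u::real. u \<noteq> 0 \<Longrightarrow> 2*(1-\<alpha>)*u^3 = 1-\<alpha>+(1+\<alpha>)*(1-u) \<Longrightarrow>
        (1-u) * (2 - (1+(1-u))/u^3) = \<alpha> * (2*(1-u) - (1-u)/u^2)"
    proof -
      fix u :: real assume u: "u \<noteq> 0" and e: "2*(1-\<alpha>)*u^3 = 1-\<alpha>+(1+\<alpha>)*(1-u)"
      have "(1-u) * (2 - (1+(1-u))/u^3) - \<alpha> * (2*(1-u) - (1-u)/u^2)
          = (1-u)/u^3 * (2*(1-\<alpha>)*u^3 - (1-\<alpha>) - (1+\<alpha>)*(1-u))"
        using u by (simp add: field_simps power2_eq_square power3_eq_cube)
      also have "\<dots> = 0" using e by simp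
      finally show "(1-u) * (2 - (1+(1-u))/u^3) = \<alpha> * (2*(1-u) - (1-u)/u^2)" by simp
    qed
    from this[OF nz] eq show ?thesis by (simp add: D_def F_def)
  qed
  have sq: "starq f0 (of_real t) = of_real (t * D / F)"
    using t by (simp add: starq_def dd ff)
  show ?thesis
  proof (cases "F = 0")
    case True then show ?thesis using sq by simp
  next
    case False
    then have "t * D / F = \<alpha>" using key by simp
    then show ?thesis using sq by simp
  qed
qed

lemma cube_less: fixes a b :: real assumes "a < b" shows "a^3 < b^3"
proof -
  have "b^3 - a^3 = (b - a) * ((a+b)^2 + a^2 + b^2) / 2"
    by (simp add: algebra_simps power2_eq_square power3_eq_cube)
  moreover have "a^2 + b^2 > 0" using assms
    by (metis add_pos_nonneg not_less_iff_gr_or_eq sum_power2_gt_zero_iff zero_le_power2)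
  then have "(a+b)^2 + a^2 + b^2 > 0" by (smt (verit) zero_le_power2)
  ultimately show ?thesis using assms by (smt (verit) divide_pos_pos mult_pos_pos)
qed

definition gg :: "real \<Rightarrow> real \<Rightarrow> real" where
  "gg \<alpha> r = 2*(1-\<alpha>)*(1-r)^3 - (1-\<alpha>+(1+\<alpha>)*r)"

lemma gg_dec: assumes "0 \<le> \<alpha>" "\<alpha> < 1" "r < r'" shows "gg \<alpha> r' < gg \<alpha> r"
proof -
  have "(1-r')^3 < (1-r)^3" using assms by (intro cube_less) auto
  then have "2*(1-\<alpha>)*(1-r')^3 \<le> 2*(1-\<alpha>)*(1-r)^3" using assms by (intro mult_left_mono) auto
  moreover have "(1+\<alpha>)*r < (1+\<alpha>)*r'" using assms by (intro mult_strict_left_mono) auto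
  ultimately show ?thesis by (simp add: gg_def)
qed

lemma root_in01: fixes \<alpha> r :: real assumes "0 \<le> \<alpha>" "\<alpha> < 1" "2*(1-\<alpha>)*(1-r)^3 = 1-\<alpha>+(1+\<alpha>)*r"
  shows "0 < r \<and> r < 1"
proof -
  have g: "gg \<alpha> r = 0" using assms by (simp add: gg_def)
  have "gg \<alpha> 0 > 0" "gg \<alpha> 1 < 0" using assms by (auto simp: gg_def)
  moreover have "\<not> r \<le> 0"
  proof
    assume "r \<le> 0"
    then consider "r = 0" | "r < 0" by linarith
    then show False using gg_dec[OF assms(1,2), of r 0] g \<open>gg \<alpha> 0 > 0\<close> by cases auto
  qed
  moreover have "\<not> r \<ge> 1"
  proof
    assume "r \<ge> 1"
    then consider "r = 1" | "1 < r" by linarith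
    then show False using gg_dec[OF assms(1,2), of 1 r] g \<open>gg \<alpha> 1 < 0\<close> by cases auto
  qed
  ultimately show ?thesis by auto
qed

lemma ex1_root: fixes \<alpha> :: real assumes "0 \<le> \<alpha>" "\<alpha> < 1"
  shows "\<exists>!r. 0 < r \<and> r < 1 \<and> 2*(1-\<alpha>)*(1-r)^3 = 1-\<alpha>+(1+\<alpha>)*r"
proof -
  have "\<exists>x\<ge>0. x \<le> 1 \<and> gg \<alpha> x = 0"
    by (rule IVT2) (use assms in \<open>auto simp: gg_def intro!: continuous_intros\<close>)
  then obtain x where "gg \<alpha> x = 0" by blast
  then have x: "2*(1-\<alpha>)*(1-x)^3 = 1-\<alpha>+(1+\<alpha>)*x" by (simp add: gg_def)
  show ?thesis
  proof (rule ex1I[of _ x])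
    show "0 < x \<and> x < 1 \<and> 2*(1-\<alpha>)*(1-x)^3 = 1-\<alpha>+(1+\<alpha>)*x" using root_in01[OF assms x] x by simp
  next
    fix y assume "0 < y \<and> y < 1 \<and> 2*(1-\<alpha>)*(1-y)^3 = 1-\<alpha>+(1+\<alpha>)*y"
    then have "gg \<alpha> y = gg \<alpha> x" using x by (simp add: gg_def)
    then show "y = x" using gg_dec[OF assms, of x y] gg_dec[OF assms, of y x]
      by (cases x y rule: linorder_cases) auto
  qed
qed

lemma alg: assumes "0 \<le> \<alpha>" "\<alpha> < 1" "0 \<le> r" "r < 1" "gg \<alpha> r > 0"
  shows "1/(1-r)^2 - 1 < 1 \<and> (2*r/(1-r)^3) / (1 - (1/(1-r)^2 - 1)) < 1-\<alpha>"
proof -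
  define u where "u = 1 - r"
  have u: "0 < u" "u \<le> 1" using assms by (auto simp: u_def)
  have r: "r = 1 - u" by (simp add: u_def)
  have g: "2*(1-\<alpha>)*u^3 - (1-\<alpha>+(1+\<alpha>)*(1-u)) > 0" using assms(5) by (simp add: gg_def u_def)
  have id: "(1-\<alpha>)*(1 - (1/u^2 - 1)) - 2*(1-u)/u^3 = (2*(1-\<alpha>)*u^3 - (1-\<alpha>+(1+\<alpha>)*(1-u))) / u^3"
    using u by (simp add: field_simps power2_eq_square power3_eq_cube)
  have pos: "(1-\<alpha>)*(1 - (1/u^2 - 1)) - 2*(1-u)/u^3 > 0"
    unfolding id using g u by simp
  have S2: "2*(1-u)/u^3 \<ge> 0" using u by simp
  then have "(1-\<alpha>)*(1 - (1/u^2 - 1)) > 0" using pos by linarith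
  then have S1: "1 - (1/u^2 - 1) > 0" using assms by (simp add: zero_less_mult_iff)
  have "(2*(1-u)/u^3) / (1 - (1/u^2 - 1)) < 1-\<alpha>"
    using S1 pos by (subst pos_divide_less_eq) (auto simp: mult.commute)
  then show ?thesis using S1 by (simp add: r)
qed

lemma Re_ge: "Re w \<ge> 1 - cmod (w - 1)"
proof -
  have "\<bar>Re (w - 1)\<bar> \<le> cmod (w - 1)" by (rule abs_Re_le_cmod)
  then show ?thesis by simp
qed

lemma inside:
  fixes \<alpha> r0 :: real
  assumes a: "0 \<le> \<alpha>" "\<alpha> < 1" and r0: "0 < r0" "r0 < 1" "2*(1-\<alpha>)*(1-r0)^3 = 1-\<alpha>+(1+\<alpha>)*r0"
    and f: "f \<in> coeff_class" and z: "cmod z < r0"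
  shows "(z \<noteq> 0 \<longrightarrow> f z \<noteq> 0) \<and> cmod (starq f z - 1) < 1 - \<alpha>"
proof (cases "z = 0")
  case True then show ?thesis using a by (simp add: starq_def)
next
  case False
  have g0: "gg \<alpha> r0 = 0" using r0 by (simp add: gg_def)
  have "gg \<alpha> (cmod z) > 0" using gg_dec[OF a z] g0 by simp
  from alg[OF a _ _ this] z r0 have A: "1/(1-cmod z)^2 - 1 < 1"
    "(2*cmod z/(1-cmod z)^3) / (1 - (1/(1-cmod z)^2 - 1)) < 1-\<alpha>" by auto
  from key[OF f _ False A(1)] z r0 A(2) show ?thesis by auto
qed

lemma radius_alpha:
  fixes \<alpha> :: real assumes a: "0 \<le> \<alpha>" "\<alpha> < 1"
  shows "radius_starlike_order coeff_class \<alpha> =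
     (THE r. 0 < r \<and> r < 1 \<and> 2 * (1 - \<alpha>) * (1 - r) ^ 3 = 1 - \<alpha> + (1 + \<alpha>) * r)"
proof -
  define r0 where "r0 = (THE r. 0 < r \<and> r < 1 \<and> 2 * (1 - \<alpha>) * (1 - r) ^ 3 = 1 - \<alpha> + (1 + \<alpha>) * r)"
  have r0: "0 < r0" "r0 < 1" "2 * (1 - \<alpha>) * (1 - r0) ^ 3 = 1 - \<alpha> + (1 + \<alpha>) * r0"
    using theI'[OF ex1_root[OF a]] unfolding r0_def by auto
  show ?thesis unfolding radius_starlike_order_def r0_def[symmetric]
  proof (rule cSup_eq_maximum)
    show "r0 \<in> {r. 0 < r \<and> r \<le> 1 \<and> (\<forall>f\<in>coeff_class. (\<forall>z. 0 < cmod z \<and> cmod z < r \<longrightarrow> f z \<noteq> 0) \<and>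
       (\<forall>z. cmod z < r \<longrightarrow> \<alpha> < Re (starq f z)))}"
    proof (safe)
      show "0 < r0" "r0 \<le> 1" using r0 by auto
    next
      fix f z assume "f \<in> coeff_class" "0 < cmod z" "cmod z < r0" "f z = 0"
      then show False using inside[OF a r0, of f z] by auto
    next
      fix f z assume "f \<in> coeff_class" "cmod z < r0"
      then have "cmod (starq f z - 1) < 1 - \<alpha>" using inside[OF a r0, of f z] by auto
      then show "\<alpha> < Re (starq f z)" using Re_ge[of "starq f z"] by linarith
    qed
  next
    fix x assume "x \<in> {r. 0 < r \<and> r \<le> 1 \<and> (\<forall>f\<in>coeff_class. (\<forall>z. 0 < cmod z \<and> cmod z < r \<longrightarrow> f z \<noteq> 0) \<and>
       (\<forall>z. cmod z < r \<longrightarrow> \<alpha> < Re (starq f z)))}"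
    then have x: "\<And>z. cmod z < x \<Longrightarrow> \<alpha> < Re (starq f0 z)" using f0_class by blast
    show "x \<le> r0"
    proof (rule ccontr)
      assume "\<not> x \<le> r0"
      then have "\<alpha> < Re (starq f0 (of_real r0))" using x[of "of_real r0"] r0 by simp
      then show False using sharp[OF r0] a by auto
    qed
  qed
qed

lemma radius_par:
  "radius_parabolic coeff_class = radius_starlike_order coeff_class (1/2)"
proof -
  have a: "0 \<le> (1/2::real)" "(1/2::real) < 1" by auto
  define r0 where "r0 = (THE r. 0 < r \<and> r < 1 \<and> 2 * (1 - 1/2) * (1 - r) ^ 3 = 1 - 1/2 + (1 + 1/2) * (r::real))"
  have r0: "0 < r0" "r0 < 1" "2 * (1 - 1/2) * (1 - r0) ^ 3 = 1 - 1/2 + (1 + 1/2) * r0"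
    using theI'[OF ex1_root[OF a]] unfolding r0_def by auto
  have "radius_parabolic coeff_class = r0" unfolding radius_parabolic_def
  proof (rule cSup_eq_maximum)
    show "r0 \<in> {r. 0 < r \<and> r \<le> 1 \<and> (\<forall>f\<in>coeff_class. \<forall>z. cmod z < r \<longrightarrow> cmod (starq f z - 1) < Re (starq f z))}"
    proof (safe)
      show "0 < r0" "r0 \<le> 1" using r0 by auto
    next
      fix f z assume "f \<in> coeff_class" "cmod z < r0"
      then have "cmod (starq f z - 1) < 1 - 1/2" using inside[OF a r0, of f z] by auto
      then show "cmod (starq f z - 1) < Re (starq f z)" using Re_ge[of "starq f z"] by linarith
    qed
  next
    fix x assume "x \<in> {r. 0 < r \<and> r \<le> 1 \<and> (\<forall>f\<in>coeff_class. \<forall>z. cmod z < r \<longrightarrow> cmod (starq f z - 1) < Re (starq f z))}"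
    then have x: "\<And>z. cmod z < x \<Longrightarrow> cmod (starq f0 z - 1) < Re (starq f0 z)" using f0_class by blast
    show "x \<le> r0"
    proof (rule ccontr)
      assume "\<not> x \<le> r0"
      then have "cmod (starq f0 (of_real r0) - 1) < Re (starq f0 (of_real r0))" using x[of "of_real r0"] r0 by simp
      moreover have "starq f0 (of_real r0) = of_real (1/2) \<or> starq f0 (of_real r0) = 0"
        by (rule sharp[OF r0])
      ultimately show False
      proof (elim disjE)
        assume h: "cmod (starq f0 (of_real r0) - 1) < Re (starq f0 (of_real r0))"
          and e: "starq f0 (of_real r0) = of_real (1/2)"
        have "starq f0 (of_real r0) - 1 = of_real (-1/2)" by (simp add: e)
        then have "cmod (starq f0 (of_real r0) - 1) = 1/2" by simp
        moreover have "Re (starq f0 (of_real r0)) = 1/2" by (simp add: e)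
        ultimately show False using h by simp
      qed simp
    qed
  qed
  then show ?thesis using radius_alpha[OF a] r0_def by simp
qed

lemma closed0:
  defines "x0 \<equiv> 1 + (1 / 6 powr (2/3)) * (root 3 (sqrt 330 - 18) - root 3 (sqrt 330 + 18))"
  shows "2 * (1 - 0) * (1 - x0) ^ 3 = 1 - 0 + (1 + 0) * (x0::real)"
proof -
  define q where "q = sqrt (330::real)"
  have q2: "q^2 = 330" unfolding q_def by simp
  define a where "a = root 3 (q - 18)"
  define b where "b = root 3 (q + 18)"
  define t where "t = root 3 (6::real)"
  have a3: "a^3 = q - 18" unfolding a_def by (simp add: odd_real_root_pow)
  have b3: "b^3 = q + 18" unfolding b_def by (simp add: odd_real_root_pow)
  have "(q - 18) * (q + 18) = q^2 - 324"
    by (simp add: algebra_simps power2_eq_square)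
  then have "(q - 18) * (q + 18) = 6" using q2 by simp
  then have ab: "a * b = t" unfolding a_def b_def t_def by (simp add: real_root_mult[symmetric])
  have t3: "t^3 = 6" unfolding t_def by (simp add: odd_real_root_pow)
  have tpos: "t > 0" unfolding t_def by simp
  have "t = 6 powr (1/3)" unfolding t_def by (simp add: root_powr_inverse)
  then have t2: "6 powr (2/3) = t^2" by (simp add: powr_power)
  have e1: "(b-a)^3 = b^3 - a^3 - 3*(a*b)*(b-a)"
    by (simp add: power3_eq_cube algebra_simps)
  then have e2: "(b-a)^3 = 36 - 3*t*(b-a)" using a3 b3 ab by simp
  have xx: "x0 = 1 + (1 / t^2) * (a - b)" unfolding x0_def t2 a_def b_def q_def by simp
  have s: "1 - x0 = (b-a)/t^2" unfolding xx by (simp add: diff_divide_distrib)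
  have "t^6 = t^3 * t^3" by (simp add: power_add[symmetric])
  then have t6: "t^6 = 36" using t3 by simp
  have "((b-a)/t^2)^3 = (b-a)^3 / (t^2)^3" by (simp add: power_divide)
  also have "(t^2)^3 = t^6" by (simp add: power_mult[symmetric])
  also have "(b-a)^3 / t^6 = 1 - t*(b-a)/12" using e2 t6 by simp
  finally have s3: "((b-a)/t^2)^3 = 1 - t*(b-a)/12" .
  have "(b-a)/t^2 = t*(b-a)/t^3" using tpos by (simp add: power2_eq_square power3_eq_cube)
  then have s1: "(b-a)/t^2 = t*(b-a)/6" using t3 by simp
  have fin: "2 * (1 - 0) * S^3 = 1 - 0 + (1 + 0) * (1 - S)" if h1: "S^3 = 1 - T/12" and h2: "S = T/6" for S T :: real
  proof -
    have h: "2*S^3 = 2 - T/6" using h1 by simp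
    have e: "2*S^3 = 2 - S" using h unfolding h2[symmetric] .
    show ?thesis using e by simp
  qed
  have x: "x0 = 1 - (b-a)/t^2" using s by simp
  show ?thesis unfolding s using fin[OF s3 s1] x by simp
qed

lemma closed_half:
  defines "x1 \<equiv> 1 + (1 / sqrt 2) * (root 3 (3 - 2 * sqrt 2) - root 3 (3 + 2 * sqrt 2))"
  shows "2 * (1 - 1/2) * (1 - x1) ^ 3 = 1 - 1/2 + (1 + 1/2) * (x1::real)"
proof -
  define a where "a = root 3 (3 - 2 * sqrt 2)"
  define b where "b = root 3 (3 + 2 * sqrt 2)"
  define q where "q = sqrt (2::real)"
  have q2: "q^2 = 2" unfolding q_def by simp
  have qpos: "q > 0" unfolding q_def by simp
  have a3: "a^3 = 3 - 2*q" unfolding a_def q_def by (simp add: odd_real_root_pow)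
  have b3: "b^3 = 3 + 2*q" unfolding b_def q_def by (simp add: odd_real_root_pow)
  have "(3 - 2 * sqrt 2) * (3 + 2 * sqrt 2) = (1::real)"
    by (simp add: algebra_simps power2_eq_square[symmetric])
  then have ab: "a * b = 1" unfolding a_def b_def by (simp add: real_root_mult[symmetric])
  have e1: "(b-a)^3 = b^3 - a^3 - 3*(a*b)*(b-a)"
    by (simp add: power3_eq_cube algebra_simps)
  then have e2: "(b-a)^3 = 4*q - 3*(b-a)" using a3 b3 ab by simp
  have q3: "q^3 = 2*q" using q2 by (simp add: power3_eq_cube power2_eq_square)
  have xx: "x1 = 1 + (1/q)*(a-b)" by (simp add: x1_def a_def b_def q_def)
  have s: "1 - x1 = (b-a)/q" unfolding xx by (simp add: diff_divide_distrib)
  have "((b-a)/q)^3 = (b-a)^3 / q^3" by (simp add: power_divide)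
  also have "\<dots> = (4*q - 3*(b-a)) / (2*q)" using e2 q3 by simp
  also have "\<dots> = 2 - 3/2 * ((b-a)/q)" using qpos by (simp add: field_simps)
  finally have s3: "((b-a)/q)^3 = 2 - 3/2 * ((b-a)/q)" .
  have x: "x1 = 1 - (b-a)/q" using s by simp
  have fin: "\<And>S::real. S^3 = 2 - 3/2*S \<Longrightarrow> 2*(1-1/2)*S^3 = 1 - 1/2 + (1+1/2)*(1 - S)"
    by (simp add: field_simps)
  show ?thesis unfolding s using fin[OF s3] x by simp
qed


theorem corollary2p2:
  shows "(\<forall>\<alpha>::real. 0 \<le> \<alpha> \<and> \<alpha> < 1 \<longrightarrow>
            (\<exists>!r. 0 < r \<and> r < 1 \<and> 2 * (1 - \<alpha>) * (1 - r) ^ 3 = 1 - \<alpha> + (1 + \<alpha>) * r) \<and>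
            radius_starlike_order coeff_class \<alpha> =
              (THE r. 0 < r \<and> r < 1 \<and> 2 * (1 - \<alpha>) * (1 - r) ^ 3 = 1 - \<alpha> + (1 + \<alpha>) * r))
       \<and> radius_starlike_order coeff_class 0 =
           1 + (1 / 6 powr (2/3)) * (root 3 (sqrt 330 - 18) - root 3 (sqrt 330 + 18))
       \<and> radius_starlike_order coeff_class (1/2) =
           1 + (1 / sqrt 2) * (root 3 (3 - 2 * sqrt 2) - root 3 (3 + 2 * sqrt 2))
       \<and> radius_parabolic coeff_class = radius_starlike_order coeff_class (1/2)"
proof (intro conjI allI impI)
  fix \<alpha> :: real assume h: "0 \<le> \<alpha> \<and> \<alpha> < 1"
  then have a: "0 \<le> \<alpha>" "\<alpha> < 1" by auto
  show "\<exists>!r. 0 < r \<and> r < 1 \<and> 2 * (1 - \<alpha>) * (1 - r) ^ 3 = 1 - \<alpha> + (1 + \<alpha>) * r"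
    by (rule ex1_root[OF a])
next
  fix \<alpha> :: real assume h: "0 \<le> \<alpha> \<and> \<alpha> < 1"
  then have a: "0 \<le> \<alpha>" "\<alpha> < 1" by auto
  show "radius_starlike_order coeff_class \<alpha> =
       (THE r. 0 < r \<and> r < 1 \<and> 2 * (1 - \<alpha>) * (1 - r) ^ 3 = 1 - \<alpha> + (1 + \<alpha>) * r)"
    by (rule radius_alpha[OF a])
next
  have a: "0 \<le> (0::real)" "(0::real) < 1" by auto
  define x0 where "x0 = 1 + (1 / 6 powr (2/3)) * (root 3 (sqrt 330 - 18) - root 3 (sqrt 330 + 18))"
  have e: "2 * (1 - 0) * (1 - x0) ^ 3 = 1 - 0 + (1 + 0) * (x0::real)" unfolding x0_def by (rule closed0)
  have P: "0 < x0 \<and> x0 < 1 \<and> 2 * (1 - 0) * (1 - x0) ^ 3 = 1 - 0 + (1 + 0) * x0"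
    using root_in01[OF a e] e by (elim conjE) (intro conjI)
  have "(THE r. 0 < r \<and> r < 1 \<and> 2 * (1 - 0) * (1 - r) ^ 3 = 1 - 0 + (1 + 0) * r) = x0"
    by (rule the1_equality[OF ex1_root[OF a] P])
  then show "radius_starlike_order coeff_class 0 = 
           1 + (1 / 6 powr (2/3)) * (root 3 (sqrt 330 - 18) - root 3 (sqrt 330 + 18))"
    unfolding x0_def[symmetric] using radius_alpha[OF a] by (simp only:)
next
  have a: "0 \<le> (1/2::real)" "(1/2::real) < 1" by auto
  define x1 where "x1 = 1 + (1 / sqrt 2) * (root 3 (3 - 2 * sqrt 2) - root 3 (3 + 2 * sqrt 2))"
  have e: "2 * (1 - 1/2) * (1 - x1) ^ 3 = 1 - 1/2 + (1 + 1/2) * (x1::real)" unfolding x1_def by (rule closed_half)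
  have P: "0 < x1 \<and> x1 < 1 \<and> 2 * (1 - 1/2) * (1 - x1) ^ 3 = 1 - 1/2 + (1 + 1/2) * x1"
    using root_in01[OF a e] e by (elim conjE) (intro conjI)
  have "(THE r. 0 < r \<and> r < 1 \<and> 2 * (1 - 1/2) * (1 - r) ^ 3 = 1 - 1/2 + (1 + 1/2) * (r::real)) = x1"
    by (rule the1_equality[OF ex1_root[OF a] P])
  then show "radius_starlike_order coeff_class (1/2) =
           1 + (1 / sqrt 2) * (root 3 (3 - 2 * sqrt 2) - root 3 (3 + 2 * sqrt 2))"
    unfolding x1_def[symmetric] using radius_alpha[OF a] by (simp only:)
next
  show "radius_parabolic coeff_class = radius_starlike_order coeff_class (1/2)" by (rule radius_par)
qed

end
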